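(* For every positive integer $k$ there exist $\delta_k>0$ and $\rho_k>0$ depending only on $k$ such that: if $s<t$ are real and $f:[s,t)\to\mathbb{R}$ is $k$-regular, then there is an interval $J\subset[s,t)$ with $|J|>\delta_k(t-s)$ and $\inf_{x\in J}|f'(x)|\ge\rho_k\sup_{x\in[s,t)}|f'(x)|$.
   Context: For an integer $k\ge0$, a map $f:[s,t)\to\mathbb{R}$ is $k$-regular if $f$ is $C^k$ and $\sup_{x\in[s,t)}|f^{(k)}(x)|\le2\inf_{x\in[s,t)}|f^{(k)}(x)|$. *)

theory Defs
  imports "HOL-Analysis.Analysis"
begin

text \<open>A C^k function on a set S, given together with its derivatives:
  D 0 is the function, D (Suc i) is the derivative of D i (one-sided at
  endpoints, i.e. within S) for i < k, and D k is continuous on S.\<close>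
definition Ck_on :: "nat \<Rightarrow> (nat \<Rightarrow> real \<Rightarrow> real) \<Rightarrow> real set \<Rightarrow> bool" where
  "Ck_on k D S \<longleftrightarrow>
     (\<forall>i<k. \<forall>x\<in>S. (D i has_real_derivative D (Suc i) x) (at x within S)) \<and>
     continuous_on S (D k)"

definition k_regular :: "nat \<Rightarrow> (nat \<Rightarrow> real \<Rightarrow> real) \<Rightarrow> real \<Rightarrow> real \<Rightarrow> bool" where
  "k_regular k D s t \<longleftrightarrow>
     Ck_on k D {s..<t} \<and>
     bdd_above ((\<lambda>x. \<bar>D k x\<bar>) ` {s..<t}) \<and>
     (SUP x\<in>{s..<t}. \<bar>D k x\<bar>) \<le> 2 * (INF x\<in>{s..<t}. \<bar>D k x\<bar>)"

end

theory Submission imports Defs begin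

lemma mvt_within:
  fixes g g' :: "real \<Rightarrow> real"
  assumes der: "\<forall>z\<in>{s..<t}. (g has_real_derivative g' z) (at z within {s..<t})"
    and "s \<le> x" "x < y" "y < t"
  shows "\<exists>z. x < z \<and> z < y \<and> g y - g x = g' z * (y - x)"
proof -
  have "\<And>z. x \<le> z \<Longrightarrow> z \<le> y \<Longrightarrow> (g has_derivative ((*) (g' z))) (at z within {x..y})"
  proof -
    fix z assume "x \<le> z" "z \<le> y"
    then have "(g has_real_derivative g' z) (at z within {s..<t})" using der assms by auto
    then have "(g has_real_derivative g' z) (at z within {x..y})"
      by (rule has_field_derivative_subset) (use assms in auto)
    then show "(g has_derivative ((*) (g' z))) (at z within {x..y})"
      by (simp add: has_field_derivative_def)
  qed
  from mvt_simple[OF \<open>x < y\<close> this] show ?thesis by auto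
qed

lemma Ck_shift: "Ck_on (Suc j) D S \<Longrightarrow> Ck_on j (\<lambda>i. D (Suc i)) S"
  unfolding Ck_on_def by auto

lemma Ck_cont0: "Ck_on j D S \<Longrightarrow> continuous_on S (D 0)"
  unfolding Ck_on_def
  by (cases j) (auto intro: DERIV_continuous_on)

lemma lip:
  fixes g g' :: "real \<Rightarrow> real"
  assumes der: "\<forall>z\<in>{s..<t}. (g has_real_derivative g' z) (at z within {s..<t})"
    and bd: "\<And>z. z \<in> {s..<t} \<Longrightarrow> \<bar>g' z\<bar> \<le> B"
    and "x \<in> {s..<t}" "y \<in> {s..<t}"
  shows "\<bar>g y - g x\<bar> \<le> B * \<bar>y - x\<bar>"
proof -
  have *: "\<bar>g v - g u\<bar> \<le> B * \<bar>v - u\<bar>" if uv: "u \<in> {s..<t}" "v \<in> {s..<t}" "u < v" for u v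
  proof -
    obtain z where z: "u < z" "z < v" "g v - g u = g' z * (v - u)"
      using mvt_within[OF der, of u v] uv by force
    have "\<bar>g' z\<bar> \<le> B" using bd z uv by auto
    then show ?thesis using z uv by (simp add: abs_mult mult_right_mono)
  qed
  show ?thesis
  proof (cases "x < y")
    case True then show ?thesis using * assms by auto
  next
    case False
    show ?thesis
    proof (cases "x = y")
      case True then show ?thesis by simp
    next
      case False
      then have "y < x" using \<open>\<not> x < y\<close> by auto
      then show ?thesis using *[of y x] assms by (simp add: abs_minus_commute)
    qed
  qed
qed

lemma sign_const:
  fixes h :: "real \<Rightarrow> real"
  assumes "continuous_on {a..b} h" "\<And>x. x \<in> {a..b} \<Longrightarrow> h x \<noteq> 0"
  shows "(\<forall>x\<in>{a..b}. h x > 0) \<or> (\<forall>x\<in>{a..b}. h x < 0)"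
proof (rule ccontr)
  assume "\<not> ?thesis"
  then obtain p q where pq: "p \<in> {a..b}" "q \<in> {a..b}" "h p \<le> 0" "h q \<ge> 0"
    by (auto simp: not_less)
  have "\<exists>x\<in>{a..b}. h x = 0"
  proof (cases "p \<le> q")
    case True
    have "continuous_on {p..q} h" using assms(1) pq by (auto intro: continuous_on_subset)
    from IVT'[of h p 0 q, OF pq(3,4) True this] show ?thesis using pq by auto
  next
    case False
    have "continuous_on {q..p} h" using assms(1) pq by (auto intro: continuous_on_subset)
    from IVT2'[of h p 0 q, OF pq(3,4) _ this] show ?thesis using pq False by auto
  qed
  then show False using assms(2) by auto
qed

definition P :: "nat \<Rightarrow> real \<Rightarrow> real \<Rightarrow> bool" where
  "P j \<delta> \<rho> \<longleftrightarrow> (\<forall>s t D. s < t \<longrightarrow> Ck_on j D {s..<t} \<longrightarrow>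
      bdd_above ((\<lambda>x. \<bar>D j x\<bar>) ` {s..<t}) \<longrightarrow>
      (SUP x\<in>{s..<t}. \<bar>D j x\<bar>) \<le> 2 * (INF x\<in>{s..<t}. \<bar>D j x\<bar>) \<longrightarrow>
      bdd_above ((\<lambda>x. \<bar>D 0 x\<bar>) ` {s..<t}) \<and>
      (\<exists>a b. s \<le> a \<and> a < b \<and> b < t \<and> b - a > \<delta> * (t - s) \<and>
         (\<forall>x\<in>{a..b}. \<rho> * (SUP x\<in>{s..<t}. \<bar>D 0 x\<bar>) \<le> \<bar>D 0 x\<bar>)))"

lemma P0: "P 0 (1/4) (1/2)"
  unfolding P_def
proof (intro allI impI)
  fix s t :: real and D :: "nat \<Rightarrow> real \<Rightarrow> real"
  assume st: "s < t" and bdd: "bdd_above ((\<lambda>x. \<bar>D 0 x\<bar>) ` {s..<t})"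
    and sup: "(SUP x\<in>{s..<t}. \<bar>D 0 x\<bar>) \<le> 2 * (INF x\<in>{s..<t}. \<bar>D 0 x\<bar>)"
  have bb: "bdd_below ((\<lambda>x. \<bar>D 0 x\<bar>) ` {s..<t})" by (rule bdd_belowI[of _ 0]) auto
  have "\<forall>x\<in>{s..s + (t-s)/2}. 1/2 * (SUP x\<in>{s..<t}. \<bar>D 0 x\<bar>) \<le> \<bar>D 0 x\<bar>"
  proof
    fix x assume "x \<in> {s..s + (t-s)/2}"
    then have "x \<in> {s..<t}" using st by (auto simp: field_simps)
    from cINF_lower[OF bb this] sup show "1/2 * (SUP x\<in>{s..<t}. \<bar>D 0 x\<bar>) \<le> \<bar>D 0 x\<bar>" by simp
  qed
  then show "bdd_above ((\<lambda>x. \<bar>D 0 x\<bar>) ` {s..<t}) \<and>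
      (\<exists>a b. s \<le> a \<and> a < b \<and> b < t \<and> b - a > 1/4 * (t - s) \<and>
         (\<forall>x\<in>{a..b}. 1/2 * (SUP x\<in>{s..<t}. \<bar>D 0 x\<bar>) \<le> \<bar>D 0 x\<bar>))"
  proof -
    have "s < s + (t-s)/2" "s + (t-s)/2 < t" "s + (t-s)/2 - s > 1/4 * (t - s)" using st by (auto simp: field_simps)
    then show ?thesis using bdd \<open>\<forall>x\<in>_. _\<close> by blast
  qed
qed

lemma Pstep:
  assumes IH: "P j \<delta>' \<rho>'" and d0: "\<delta>' > 0" and r0: "\<rho>' > 0"
  shows "P (Suc j) (min (1/8) (\<delta>'/4)) (min (1/2) (\<rho>' * \<delta>' / 8))"
  unfolding P_def
proof (intro allI impI)
  fix s t :: real and D :: "nat \<Rightarrow> real \<Rightarrow> real"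
  define \<delta> where "\<delta> = min (1/8) (\<delta>'/4)"
  define \<rho> where "\<rho> = min (1/2) (\<rho>' * \<delta>' / 8)"
  let ?S = "{s..<t}"
  assume st: "s < t" and Ck: "Ck_on (Suc j) D ?S"
    and bddk: "bdd_above ((\<lambda>x. \<bar>D (Suc j) x\<bar>) ` ?S)"
    and supk: "(SUP x\<in>?S. \<bar>D (Suc j) x\<bar>) \<le> 2 * (INF x\<in>?S. \<bar>D (Suc j) x\<bar>)"
  define E where "E = (\<lambda>i. D (Suc i))"
  have CkE: "Ck_on j E ?S" unfolding E_def by (rule Ck_shift[OF Ck])
  from IH[unfolded P_def, rule_format, OF st CkE] bddk supk
  obtain a' b' where bdd1: "bdd_above ((\<lambda>x. \<bar>D 1 x\<bar>) ` ?S)"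
    and ab': "s \<le> a'" "a' < b'" "b' < t" "b' - a' > \<delta>' * (t - s)"
    and lb': "\<forall>x\<in>{a'..b'}. \<rho>' * (SUP x\<in>?S. \<bar>D 1 x\<bar>) \<le> \<bar>D 1 x\<bar>"
    unfolding E_def by auto
  define g where "g = D 0"
  define g' where "g' = D 1"
  define M1 where "M1 = (SUP x\<in>?S. \<bar>g' x\<bar>)"
  have der: "\<forall>z\<in>?S. (g has_real_derivative g' z) (at z within ?S)"
    using Ck unfolding Ck_on_def g_def g'_def by auto
  have contg': "continuous_on ?S g'" using Ck_cont0[OF CkE] unfolding E_def g'_def by simp
  have ne: "?S \<noteq> {}" using st by auto
  have bdg': "\<And>z. z \<in> ?S \<Longrightarrow> \<bar>g' z\<bar> \<le> M1"
    unfolding M1_def g'_def using bdd1 by (auto intro: cSUP_upper)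
  have lipg: "\<And>x y. x \<in> ?S \<Longrightarrow> y \<in> ?S \<Longrightarrow> \<bar>g y - g x\<bar> \<le> M1 * \<bar>y - x\<bar>"
    by (rule lip[OF der bdg'])
  have M1nn: "M1 \<ge> 0" using bdg'[of s] st by auto
  have bdd0: "bdd_above ((\<lambda>x. \<bar>D 0 x\<bar>) ` ?S)"
  proof (rule bdd_aboveI2)
    fix x assume x: "x \<in> ?S"
    have "\<bar>g x - g s\<bar> \<le> M1 * \<bar>x - s\<bar>" using lipg[OF _ x, of s] st by auto
    also have "\<dots> \<le> M1 * (t - s)" using x M1nn by (intro mult_left_mono) auto
    finally show "\<bar>D 0 x\<bar> \<le> \<bar>g s\<bar> + M1 * (t - s)" unfolding g_def by linarith
  qed
  define M where "M = (SUP x\<in>?S. \<bar>g x\<bar>)"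
  have bdg: "\<And>x. x \<in> ?S \<Longrightarrow> \<bar>g x\<bar> \<le> M"
    unfolding M_def g_def using bdd0 by (auto intro: cSUP_upper)
  have Mnn: "M \<ge> 0" using bdg[of s] st by auto
  have goal: "\<exists>a b. s \<le> a \<and> a < b \<and> b < t \<and> b - a > \<delta> * (t - s) \<and>
         (\<forall>x\<in>{a..b}. \<rho> * M \<le> \<bar>g x\<bar>)"
  proof (cases "M = 0")
    case True
    have "\<delta> \<le> 1/8" unfolding \<delta>_def by simp
    then have "\<delta> * (t - s) \<le> 1/8 * (t - s)" using st by (intro mult_right_mono) auto
    then have "s < s + (t-s)/2" "s + (t-s)/2 < t" "s + (t-s)/2 - s > \<delta> * (t - s)"
      using st by (auto simp: field_simps)
    moreover have "\<forall>x\<in>{s..s + (t-s)/2}. \<rho> * M \<le> \<bar>g x\<bar>" using True by simp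
    ultimately show ?thesis by (intro exI[of _ s] exI[of _ "s + (t-s)/2"]) simp
  next
    case Mpos: False
    then have Mpos: "M > 0" using Mnn by auto
    show ?thesis
    proof (cases "M \<ge> 2 * M1 * (t - s)")
      case True
      have "3/4 * M < M" using Mpos by auto
      moreover have "bdd_above ((\<lambda>x. \<bar>g x\<bar>) ` ?S)" using bdd0 unfolding g_def .
      ultimately obtain x0 where x0: "x0 \<in> ?S" "3/4 * M < \<bar>g x0\<bar>"
        using less_cSUP_iff[OF ne, of "\<lambda>x. \<bar>g x\<bar>" "3/4 * M"] unfolding M_def by blast
      have near: "\<rho> * M \<le> \<bar>g x\<bar>" if x: "x \<in> ?S" "\<bar>x - x0\<bar> \<le> (t - s)/4" for x
      proof -
        have "\<bar>g x - g x0\<bar> \<le> M1 * \<bar>x - x0\<bar>" using lipg[OF x0(1) x(1)] .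
        also have "\<dots> \<le> M1 * ((t - s)/4)" using x M1nn by (intro mult_left_mono) auto
        also have "\<dots> \<le> M / 8" using True by simp
        finally have "\<bar>g x\<bar> \<ge> M/2" using x0 by linarith
        moreover have "\<rho> \<le> 1/2" unfolding \<rho>_def by simp
        moreover have "\<rho> * M \<le> 1/2 * M" using \<open>\<rho> \<le> 1/2\<close> Mpos by (intro mult_right_mono) auto
        ultimately show ?thesis by linarith
      qed
      have dl: "\<delta> * (t - s) < (t - s)/4"
      proof -
        have "\<delta> \<le> 1/8" unfolding \<delta>_def by simp
        then have "\<delta> * (t - s) \<le> 1/8 * (t - s)" using st by (intro mult_right_mono) auto
        moreover have "1/8 * (t - s) < (t - s) / 4" using st by simp
        ultimately show ?thesis by linarith
      qed
      show ?thesis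
      proof (cases "x0 \<le> (s + t)/2")
        case True
        show ?thesis
          apply (rule exI[of _ x0], rule exI[of _ "x0 + (t-s)/4"])
          using x0 True st dl near by (auto simp: field_simps)
      next
        case False
        show ?thesis
          apply (rule exI[of _ "x0 - (t-s)/4"], rule exI[of _ x0])
          using x0 False st dl near by (auto simp: field_simps)
      qed
    next
      case False
      then have Mlt: "M < 2 * M1 * (t - s)" by simp
      have M1pos: "M1 > 0"
      proof (rule ccontr)
        assume "\<not> M1 > 0"
        then have "M1 = 0" using M1nn by auto
        then show False using Mlt Mpos by simp
      qed
      define \<sigma> where "\<sigma> = \<rho>' * M1"
      have spos: "\<sigma> > 0" unfolding \<sigma>_def using r0 M1pos by simp
      have lb: "\<And>x. x \<in> {a'..b'} \<Longrightarrow> \<sigma> \<le> \<bar>g' x\<bar>"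
        using lb' unfolding \<sigma>_def M1_def g'_def by auto
      have sub: "{a'..b'} \<subseteq> ?S" using ab' by auto
      have "(\<forall>x\<in>{a'..b'}. g' x > 0) \<or> (\<forall>x\<in>{a'..b'}. g' x < 0)"
        apply (rule sign_const)
        using continuous_on_subset[OF contg' sub] apply simp
        using lb spos by force
      then obtain \<epsilon> :: real where eps: "\<bar>\<epsilon>\<bar> = 1" "\<And>x. x \<in> {a'..b'} \<Longrightarrow> \<epsilon> * g' x \<ge> \<sigma>"
      proof (elim disjE)
        assume "\<forall>x\<in>{a'..b'}. g' x > 0"
        then show thesis using lb by (intro that[of 1]) force+
      next
        assume "\<forall>x\<in>{a'..b'}. g' x < 0"
        then show thesis using lb by (intro that[of "-1"]) force+
      qed
      have incr: "\<epsilon> * g y - \<epsilon> * g x \<ge> \<sigma> * (y - x)"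
        if xy: "x \<in> {a'..b'}" "y \<in> {a'..b'}" "x \<le> y" for x y
      proof (cases "x = y")
        case True then show ?thesis by simp
      next
        case False
        then have "x < y" using xy by auto
        then obtain z where z: "x < z" "z < y" "g y - g x = g' z * (y - x)"
          using mvt_within[OF der, of x y] xy ab' by force
        have "z \<in> {a'..b'}" using z xy by auto
        then have "\<epsilon> * g' z \<ge> \<sigma>" by (rule eps(2))
        then have "\<epsilon> * g' z * (y - x) \<ge> \<sigma> * (y - x)" using \<open>x < y\<close>
          by (intro mult_right_mono) auto
        moreover have "\<epsilon> * g y - \<epsilon> * g x = \<epsilon> * g' z * (y - x)"
          using z(3) by (metis mult.assoc right_diff_distrib)
        ultimately show ?thesis by linarith
      qed
      define L where "L = b' - a'"
      define mid where "mid = (a' + b')/2"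
      have Lpos: "L > 0" using ab' unfolding L_def by simp
      have gabs: "\<bar>g x\<bar> = \<bar>\<epsilon> * g x\<bar>" for x using eps(1) by (simp add: abs_mult)
      have key: "\<rho> * M \<le> \<sigma> * L / 4"
      proof -
        have "\<rho> * M \<le> (\<rho>' * \<delta>' / 8) * M" unfolding \<rho>_def using Mnn
          by (intro mult_right_mono) auto
        also have "\<dots> \<le> (\<rho>' * \<delta>' / 8) * (2 * M1 * (t - s))"
          using Mlt r0 d0 by (intro mult_left_mono) auto
        also have "\<dots> = \<rho>' * M1 * (\<delta>' * (t - s)) / 4" by (simp add: algebra_simps)
        also have "\<dots> \<le> \<rho>' * M1 * L / 4"
          using ab' r0 M1pos unfolding L_def by (intro divide_right_mono mult_left_mono) auto
        finally show ?thesis unfolding \<sigma>_def .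
      qed
      have dL: "\<delta> * (t - s) < L / 4"
      proof -
        have "\<delta> \<le> \<delta>'/4" unfolding \<delta>_def by simp
        then have "\<delta> * (t - s) \<le> \<delta>'/4 * (t - s)" using st by (intro mult_right_mono) auto
        moreover have "\<delta>'/4 * (t - s) = (\<delta>' * (t - s)) / 4" by simp
        ultimately have "\<delta> * (t - s) \<le> (\<delta>' * (t - s)) / 4" by simp
        moreover have "(\<delta>' * (t - s)) / 4 < L / 4" using ab'(4) unfolding L_def by simp
        ultimately show ?thesis by linarith
      qed
      show ?thesis
      proof (cases "\<epsilon> * g mid \<ge> 0")
        case True
        have "\<forall>x\<in>{mid + L/4..b'}. \<rho> * M \<le> \<bar>g x\<bar>"
        proof
          fix x assume x: "x \<in> {mid + L/4..b'}"
          have "\<epsilon> * g x - \<epsilon> * g mid \<ge> \<sigma> * (x - mid)"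
            using x ab'(1-3) Lpos by (intro incr) (auto simp: mid_def L_def field_simps)
          moreover have "\<sigma> * (x - mid) \<ge> \<sigma> * (L/4)" using x spos by (intro mult_left_mono) auto
          ultimately have "\<epsilon> * g x \<ge> \<sigma> * L / 4" using True by linarith
          then show "\<rho> * M \<le> \<bar>g x\<bar>" using key gabs[of x] by linarith
        qed
        then show ?thesis using ab' dL Lpos
          by (intro exI[of _ "mid + L/4"] exI[of _ b']) (auto simp: mid_def L_def field_simps)
      next
        case False
        have "\<forall>x\<in>{a'..mid - L/4}. \<rho> * M \<le> \<bar>g x\<bar>"
        proof
          fix x assume x: "x \<in> {a'..mid - L/4}"
          have "\<epsilon> * g mid - \<epsilon> * g x \<ge> \<sigma> * (mid - x)"
            using x ab'(1-3) Lpos by (intro incr) (auto simp: mid_def L_def field_simps)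
          moreover have "\<sigma> * (mid - x) \<ge> \<sigma> * (L/4)" using x spos by (intro mult_left_mono) auto
          ultimately have "\<epsilon> * g x \<le> - (\<sigma> * L / 4)" using False by linarith
          then show "\<rho> * M \<le> \<bar>g x\<bar>" using key gabs[of x] by linarith
        qed
        then show ?thesis using ab' dL Lpos
          by (intro exI[of _ a'] exI[of _ "mid - L/4"]) (auto simp: mid_def L_def field_simps)
      qed
    qed
  qed
  then show "bdd_above ((\<lambda>x. \<bar>D 0 x\<bar>) ` ?S) \<and>
      (\<exists>a b. s \<le> a \<and> a < b \<and> b < t \<and> b - a > min (1/8) (\<delta>'/4) * (t - s) \<and>
         (\<forall>x\<in>{a..b}. min (1/2) (\<rho>' * \<delta>' / 8) * (SUP x\<in>?S. \<bar>D 0 x\<bar>) \<le> \<bar>D 0 x\<bar>))"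
    using bdd0 unfolding \<delta>_def \<rho>_def M_def g_def by blast
qed

lemma Pall: "\<exists>\<delta>>0. \<exists>\<rho>>0. P j \<delta> \<rho>"
proof (induction j)
  case 0
  have "(1/4::real) > 0" "(1/2::real) > 0" by auto
  then show ?case using P0 by blast
next
  case (Suc j)
  then obtain \<delta> \<rho> where "\<delta> > 0" "\<rho> > 0" "P j \<delta> \<rho>" by auto
  moreover have "min (1/8) (\<delta>/4) > 0" "min (1/2) (\<rho> * \<delta> / 8) > 0"
    using \<open>\<delta> > 0\<close> \<open>\<rho> > 0\<close> by auto
  ultimately show ?case using Pstep by blast
qed

theorem mainTheorem18:
  fixes k :: nat
  assumes "k > 0"
  shows "\<exists>\<delta>>0. \<exists>\<rho>>0. \<forall>s t :: real. \<forall>f :: real \<Rightarrow> real. \<forall>D :: nat \<Rightarrow> real \<Rightarrow> real.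
           s < t \<longrightarrow> D 0 = f \<longrightarrow> k_regular k D s t \<longrightarrow>
           (\<exists>a b. s \<le> a \<and> a < b \<and> b < t \<and> b - a > \<delta> * (t - s) \<and>
              (INF x\<in>{a..b}. \<bar>D 1 x\<bar>) \<ge> \<rho> * (SUP x\<in>{s..<t}. \<bar>D 1 x\<bar>))"
proof -
  obtain j where k: "k = Suc j" using assms by (cases k) auto
  obtain \<delta> \<rho> where dr: "\<delta> > 0" "\<rho> > 0" "P j \<delta> \<rho>" using Pall by blast
  have "\<forall>s t :: real. \<forall>f :: real \<Rightarrow> real. \<forall>D :: nat \<Rightarrow> real \<Rightarrow> real.
           s < t \<longrightarrow> D 0 = f \<longrightarrow> k_regular k D s t \<longrightarrow>
           (\<exists>a b. s \<le> a \<and> a < b \<and> b < t \<and> b - a > \<delta> * (t - s) \<and>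
              (INF x\<in>{a..b}. \<bar>D 1 x\<bar>) \<ge> \<rho> * (SUP x\<in>{s..<t}. \<bar>D 1 x\<bar>))"
  proof (intro allI impI)
    fix s t :: real and f :: "real \<Rightarrow> real" and D :: "nat \<Rightarrow> real \<Rightarrow> real"
    assume st: "s < t" and "D 0 = f" and reg: "k_regular k D s t"
    define E where "E = (\<lambda>i. D (Suc i))"
    have "Ck_on j E {s..<t}" unfolding E_def
      using reg k by (intro Ck_shift) (simp add: k_regular_def)
    moreover have "bdd_above ((\<lambda>x. \<bar>E j x\<bar>) ` {s..<t})"
      "(SUP x\<in>{s..<t}. \<bar>E j x\<bar>) \<le> 2 * (INF x\<in>{s..<t}. \<bar>E j x\<bar>)"
      using reg k unfolding E_def k_regular_def by auto
    ultimately obtain a b where ab: "s \<le> a" "a < b" "b < t" "b - a > \<delta> * (t - s)"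
      "\<forall>x\<in>{a..b}. \<rho> * (SUP x\<in>{s..<t}. \<bar>E 0 x\<bar>) \<le> \<bar>E 0 x\<bar>"
      using dr(3)[unfolded P_def, rule_format, OF st] by blast
    have "\<rho> * (SUP x\<in>{s..<t}. \<bar>D 1 x\<bar>) \<le> (INF x\<in>{a..b}. \<bar>D 1 x\<bar>)"
      using ab(2,5) unfolding E_def by (intro cINF_greatest) auto
    then show "\<exists>a b. s \<le> a \<and> a < b \<and> b < t \<and> b - a > \<delta> * (t - s) \<and>
              (INF x\<in>{a..b}. \<bar>D 1 x\<bar>) \<ge> \<rho> * (SUP x\<in>{s..<t}. \<bar>D 1 x\<bar>)"
      using ab by blast
  qed
  then show ?thesis using dr(1,2) by blast
qed

end
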